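(* Let $\theta_1<\theta_2$, $f\in C^2([\theta_1,\theta_2])$, $\gamma>1$, and let $I\subseteq[\theta_1,\theta_2]$ be a closed interval. Suppose that, for positive constants $A$ and $\alpha$ with $\alpha<2\gamma-3$, one of the following holds: $|f'(s)f''(s)|\ge A(s-\theta_1)^\alpha$ for all $s\in I$; or $|f'(s)f''(s)|\ge A(\theta_2-s)^\alpha$ for all $s\in I$. Then there is a constant $C>0$ depending only on $A,\alpha,\theta_1,\theta_2,\gamma$ such that $\int_I|f(s)|^{-1/\gamma}\,ds\le C$. *)

theory Defs
  imports "HOL-Analysis.Analysis"
begin

end

theory Submission
  imports Defs
begin

lemma diam_cover:
  fixes S :: "real set"
  assumes "d \<ge> 0" "\<forall>x\<in>S. \<forall>y\<in>S. \<bar>x - y\<bar> \<le> d"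
  shows "\<exists>T\<in>sets lborel. S \<subseteq> T \<and> emeasure lborel T \<le> ennreal (2*d)"
proof (cases "S = {}")
  case True then show ?thesis by (intro bexI[of _ "{}"]) auto
next
  case False
  then obtain c where c: "c \<in> S" by auto
  have "S \<subseteq> {c-d..c+d}" using assms c by (force simp: abs_le_iff)
  moreover have "emeasure lborel {c-d..c+d} = ennreal (2*d)" using assms by simp
  ultimately show ?thesis by (intro bexI[of _ "{c-d..c+d}"]) auto
qed

lemma key1:
  fixes g w :: "real \<Rightarrow> real"
  assumes uv: "u \<le> v" and der: "\<forall>s\<in>{u<..<v}. (g has_real_derivative 2 * w s) (at s)"
    and cont: "continuous_on {u..v} g" and sg: "\<sigma> = 1 \<or> \<sigma> = -1"
    and lb: "\<forall>s\<in>{u<..<v}. \<sigma> * w s \<ge> A * (s - p) powr \<alpha>"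
    and pu: "p \<le> u" and A: "A > 0" and al: "\<alpha> > 0"
  shows "\<sigma> * (g v - g u) \<ge> 2 * A / (\<alpha> + 1) * (v - u) powr (\<alpha> + 1)"
proof -
  define \<phi> where "\<phi> s = \<sigma> * g s - 2 * A / (\<alpha> + 1) * (s - u) powr (\<alpha> + 1)" for s
  have "\<phi> u \<le> \<phi> v"
  proof (rule DERIV_nonneg_imp_increasing_open[OF uv])
    fix x assume x: "u < x" "x < v"
    have d1: "(g has_real_derivative 2 * w x) (at x)" using der x by auto
    have d2: "((\<lambda>s. (s - u) powr (\<alpha> + 1)) has_real_derivative (\<alpha> + 1) * (x - u) powr \<alpha>) (at x)"
      using x by (auto intro!: derivative_eq_intros)
    have "(\<phi> has_real_derivative \<sigma> * (2 * w x) - 2 * A / (\<alpha> + 1) * ((\<alpha> + 1) * (x - u) powr \<alpha>)) (at x)"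
      unfolding \<phi>_def by (intro DERIV_diff DERIV_add DERIV_cmult d1 d2)
    moreover have "\<sigma> * (2 * w x) - 2 * A / (\<alpha> + 1) * ((\<alpha> + 1) * (x - u) powr \<alpha>) = 2 * (\<sigma> * w x - A * (x - u) powr \<alpha>)"
      using al by (simp add: field_simps)
    moreover have "A * (x - u) powr \<alpha> \<le> A * (x - p) powr \<alpha>"
      using x pu A al by (intro mult_left_mono powr_mono2) auto
    ultimately show "\<exists>y. (\<phi> has_real_derivative y) (at x) \<and> 0 \<le> y" using lb x by force
  next
    show "continuous_on {u..v} \<phi>" unfolding \<phi>_def using al
      by (intro continuous_intros cont continuous_on_powr') auto
  qed
  then show ?thesis unfolding \<phi>_def by (simp add: algebra_simps)
qed

lemma key2:
  fixes g w :: "real \<Rightarrow> real"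
  assumes uv: "u \<le> v" and der: "\<forall>s\<in>{u<..<v}. (g has_real_derivative 2 * w s) (at s)"
    and cont: "continuous_on {u..v} g" and sg: "\<sigma> = 1 \<or> \<sigma> = -1"
    and lb: "\<forall>s\<in>{u<..<v}. \<sigma> * w s \<ge> A * (p - s) powr \<alpha>"
    and pu: "v \<le> p" and A: "A > 0" and al: "\<alpha> > 0"
  shows "\<sigma> * (g v - g u) \<ge> 2 * A / (\<alpha> + 1) * (v - u) powr (\<alpha> + 1)"
proof -
  define \<phi> where "\<phi> s = \<sigma> * g s + 2 * A / (\<alpha> + 1) * (v - s) powr (\<alpha> + 1)" for s
  have "\<phi> u \<le> \<phi> v"
  proof (rule DERIV_nonneg_imp_increasing_open[OF uv])
    fix x assume x: "u < x" "x < v"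
    have d1: "(g has_real_derivative 2 * w x) (at x)" using der x by auto
    have d2: "((\<lambda>s. (v - s) powr (\<alpha> + 1)) has_real_derivative - ((\<alpha> + 1) * (v - x) powr \<alpha>)) (at x)"
      using x by (auto intro!: derivative_eq_intros)
    have "(\<phi> has_real_derivative \<sigma> * (2 * w x) + 2 * A / (\<alpha> + 1) * (- ((\<alpha> + 1) * (v - x) powr \<alpha>))) (at x)"
      unfolding \<phi>_def by (intro DERIV_diff DERIV_add DERIV_cmult d1 d2)
    moreover have "\<sigma> * (2 * w x) + 2 * A / (\<alpha> + 1) * (- ((\<alpha> + 1) * (v - x) powr \<alpha>)) = 2 * (\<sigma> * w x - A * (v - x) powr \<alpha>)"
      using al by (simp add: field_simps)
    moreover have "A * (v - x) powr \<alpha> \<le> A * (p - x) powr \<alpha>"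
      using x pu A al by (intro mult_left_mono powr_mono2) auto
    ultimately show "\<exists>y. (\<phi> has_real_derivative y) (at x) \<and> 0 \<le> y" using lb x by force
  next
    show "continuous_on {u..v} \<phi>" unfolding \<phi>_def using al
      by (intro continuous_intros cont continuous_on_powr') auto
  qed
  then show ?thesis unfolding \<phi>_def by (simp add: algebra_simps)
qed

lemma sublevel:
  fixes f f' :: "real \<Rightarrow> real"
  assumes ab: "a \<le> b" and der: "\<forall>s\<in>{a..b}. (f has_real_derivative f' s) (at s within {a..b})"
    and qc: "\<forall>x z y. a \<le> x \<longrightarrow> x \<le> z \<longrightarrow> z \<le> y \<longrightarrow> y \<le> b \<longrightarrow> f' z * f' z \<ge> min (f' x * f' x) (f' y * f' y)"
    and K: "\<forall>u v. a \<le> u \<longrightarrow> u \<le> v \<longrightarrow> v \<le> b \<longrightarrow> \<bar>f' v * f' v - f' u * f' u\<bar> \<ge> c * (v - u) powr (\<alpha> + 1)"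
    and c: "c > 0" and al: "\<alpha> > 0" and t: "t > 0"
  shows "\<exists>T\<in>sets lborel. {s\<in>{a..b}. \<bar>f s\<bar> \<le> t} \<subseteq> T \<and>
           emeasure lborel T \<le> ennreal ((2 * c powr (-1/(\<alpha>+1)) + 4) * t powr (2/(\<alpha>+3)))"
proof -
  define \<delta> where "\<delta> = t powr (2*(\<alpha>+1)/(\<alpha>+3))"
  define s\<delta> where "s\<delta> = t powr ((\<alpha>+1)/(\<alpha>+3))"
  define L where "L = (\<delta>/c) powr (1/(\<alpha>+1))"
  define P where "P = {s\<in>{a..b}. f' s * f' s < \<delta>}"
  define Q where "Q = {s\<in>{a..b}. \<bar>f s\<bar> \<le> t \<and> f' s * f' s \<ge> \<delta>}"
  have sd_pos: "s\<delta> > 0" unfolding s\<delta>_def using t by simp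
  have sd_sq: "s\<delta> * s\<delta> = \<delta>" unfolding s\<delta>_def \<delta>_def using t
    by (simp add: powr_add[symmetric] add_divide_distrib[symmetric])
  have L_eq: "L = c powr (-1/(\<alpha>+1)) * t powr (2/(\<alpha>+3))"
  proof -
    have "L = \<delta> powr (1/(\<alpha>+1)) / c powr (1/(\<alpha>+1))" unfolding L_def \<delta>_def using c t
      by (simp add: powr_divide)
    also have "\<delta> powr (1/(\<alpha>+1)) = t powr (2/(\<alpha>+3))"
    proof -
      have "\<alpha>+1 \<noteq> 0" "\<alpha>+3 \<noteq> 0" using al by auto
      then have "2*(\<alpha>+1)/(\<alpha>+3) * (1/(\<alpha>+1)) = 2/(\<alpha>+3)" by (simp add: divide_simps; simp add: algebra_simps)
      then show ?thesis unfolding \<delta>_def using t by (simp only: powr_powr)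
    qed
    finally show ?thesis using c by (simp add: powr_minus_divide divide_inverse powr_minus)
  qed
  have tsd: "t / s\<delta> = t powr (2/(\<alpha>+3))"
  proof -
    have "t / s\<delta> = t powr (1 - (\<alpha>+1)/(\<alpha>+3))" unfolding s\<delta>_def using t by (simp add: powr_diff)
    also have "1 - (\<alpha>+1)/(\<alpha>+3) = 2/(\<alpha>+3)" using al by (simp add: field_simps)
    finally show ?thesis .
  qed
  have dP0: "y - x \<le> L" if "x \<in> P" "y \<in> P" "x \<le> y" for x y
  proof -
    have xy: "a \<le> x" "y \<le> b" "f' x * f' x < \<delta>" "f' y * f' y < \<delta>" using that unfolding P_def by auto
    have "0 \<le> f' x * f' x" "0 \<le> f' y * f' y" by auto
    then have "\<bar>f' y * f' y - f' x * f' x\<bar> < \<delta>" using xy by linarith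
    then have "c * (y - x) powr (\<alpha> + 1) < \<delta>"
      using K[rule_format, of x y] xy that by linarith
    then have "(y - x) powr (\<alpha> + 1) \<le> \<delta> / c" using c by (simp add: field_simps)
    then have "((y - x) powr (\<alpha> + 1)) powr (1/(\<alpha>+1)) \<le> (\<delta> / c) powr (1/(\<alpha>+1))"
      using al by (intro powr_mono2) auto
    then show ?thesis using al that unfolding L_def by (simp add: powr_powr)
  qed
  have dP: "\<forall>x\<in>P. \<forall>y\<in>P. \<bar>x - y\<bar> \<le> L"
    using dP0 by (metis abs_minus_commute abs_of_nonneg diff_ge_0_iff_ge linorder_linear)
  have dQ0: "y - x \<le> 2 * (t / s\<delta>)" if "x \<in> Q" "y \<in> Q" "x < y" for x y
  proof -
    have "\<exists>z\<in>{x<..<y}. f y - f x = (\<lambda>h. f' z * h) (y - x)"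
    proof (rule mvt_simple[OF \<open>x < y\<close>])
      fix z assume "x \<le> z" "z \<le> y"
      then have "(f has_real_derivative f' z) (at z within {a..b})" using der that unfolding Q_def by auto
      then have "(f has_real_derivative f' z) (at z within {x..y})"
        by (rule DERIV_subset) (use that in \<open>auto simp: Q_def\<close>)
      then show "(f has_derivative (\<lambda>h. f' z * h)) (at z within {x..y})"
        by (simp add: has_field_derivative_def)
    qed
    then obtain z where z: "x < z" "z < y" "f y - f x = f' z * (y - x)" by auto
    have "f' z * f' z \<ge> \<delta>"
      using qc[rule_format, of x z y] that z unfolding Q_def by auto
    then have "\<bar>f' z\<bar> \<ge> s\<delta>" using sd_sq sd_pos
      by (metis abs_ge_zero abs_mult_self_eq linorder_not_le mult_strict_mono')
    then have "(y - x) * s\<delta> \<le> (y - x) * \<bar>f' z\<bar>" using z by (intro mult_left_mono) auto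
    also have "\<dots> = \<bar>f y - f x\<bar>" using z by (simp add: abs_mult)
    also have "\<dots> \<le> 2 * t" using that unfolding Q_def by auto
    finally show ?thesis using sd_pos by (simp add: field_simps)
  qed
  have dQ: "\<forall>x\<in>Q. \<forall>y\<in>Q. \<bar>x - y\<bar> \<le> 2 * (t / s\<delta>)"
  proof (intro ballI)
    fix x y assume "x \<in> Q" "y \<in> Q"
    then show "\<bar>x - y\<bar> \<le> 2 * (t / s\<delta>)"
      using dQ0[of x y] dQ0[of y x] t sd_pos
      by (cases "x < y"; cases "y < x") (auto simp: abs_if)
  qed
  have L0: "L \<ge> 0" unfolding L_def by simp
  obtain T1 where T1: "T1 \<in> sets lborel" "P \<subseteq> T1" "emeasure lborel T1 \<le> ennreal (2 * L)"
    using diam_cover[OF L0 dP] by auto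
  obtain T2 where T2: "T2 \<in> sets lborel" "Q \<subseteq> T2" "emeasure lborel T2 \<le> ennreal (2 * (2 * (t / s\<delta>)))"
    using diam_cover[OF _ dQ] t sd_pos by auto
  have "{s\<in>{a..b}. \<bar>f s\<bar> \<le> t} \<subseteq> T1 \<union> T2" using T1 T2 unfolding P_def Q_def by force
  moreover have "emeasure lborel (T1 \<union> T2) \<le> ennreal (2 * L) + ennreal (2 * (2 * (t / s\<delta>)))"
    using emeasure_subadditive[OF T1(1) T2(1)] T1(3) T2(3) by (meson add_mono order.trans)
  moreover have "ennreal (2 * L) + ennreal (2 * (2 * (t / s\<delta>))) = ennreal ((2 * c powr (-1/(\<alpha>+1)) + 4) * t powr (2/(\<alpha>+3)))"
    using L0 t sd_pos by (subst ennreal_plus[symmetric]) (auto simp: L_eq tsd algebra_simps)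
  ultimately show ?thesis using T1 T2 by (intro bexI[of _ "T1 \<union> T2"]) auto
qed

lemma qcK:
  fixes f f' f'' :: "real \<Rightarrow> real"
  assumes der: "\<forall>s\<in>{\<theta>1..\<theta>2}. (f has_real_derivative f' s) (at s within {\<theta>1..\<theta>2})
                    \<and> (f' has_real_derivative f'' s) (at s within {\<theta>1..\<theta>2})"
    and cont: "continuous_on {\<theta>1..\<theta>2} f''"
    and ab: "\<theta>1 \<le> a" "a \<le> b" "b \<le> \<theta>2" and A: "A > 0" and al: "\<alpha> > 0"
    and hyp: "(\<forall>s\<in>{a..b}. \<bar>f' s * f'' s\<bar> \<ge> A * (s - \<theta>1) powr \<alpha>)
        \<or> (\<forall>s\<in>{a..b}. \<bar>f' s * f'' s\<bar> \<ge> A * (\<theta>2 - s) powr \<alpha>)"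
  shows "\<forall>x z y. a \<le> x \<longrightarrow> x \<le> z \<longrightarrow> z \<le> y \<longrightarrow> y \<le> b \<longrightarrow> f' z * f' z \<ge> min (f' x * f' x) (f' y * f' y)"
    and "\<forall>u v. a \<le> u \<longrightarrow> u \<le> v \<longrightarrow> v \<le> b \<longrightarrow> \<bar>f' v * f' v - f' u * f' u\<bar> \<ge> 2 * A / (\<alpha> + 1) * (v - u) powr (\<alpha> + 1)"
proof -
  define w where "w s = f' s * f'' s" for s
  define g where "g s = f' s * f' s" for s
  have cf': "continuous_on {\<theta>1..\<theta>2} f'"
    using der by (auto simp: continuous_on_eq_continuous_within intro: DERIV_continuous)
  have cw: "continuous_on {a..b} w" unfolding w_def
    by (intro continuous_intros continuous_on_subset[OF cf'] continuous_on_subset[OF cont]) (use ab in auto)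
  have cg: "continuous_on {\<theta>1..\<theta>2} g" unfolding g_def by (intro continuous_intros cf')
  have dg: "(g has_real_derivative 2 * w s) (at s)" if "a < s" "s < b" for s
  proof -
    have s: "\<theta>1 < s" "s < \<theta>2" using that ab by auto
    have "(g has_real_derivative f' s * f'' s + f'' s * f' s) (at s within {\<theta>1..\<theta>2})"
    proof -
      have "(f' has_real_derivative f'' s) (at s within {\<theta>1..\<theta>2})" using der s by auto
      from DERIV_mult[OF this this] show ?thesis unfolding g_def by (simp add: mult.commute)
    qed
    then show ?thesis using s by (simp add: at_within_Icc_at w_def)
  qed
  have nz: "w s \<noteq> 0" if "a < s" "s < b" for s
  proof -
    have "(s - \<theta>1) powr \<alpha> > 0" "(\<theta>2 - s) powr \<alpha> > 0" using that ab by auto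
    then show ?thesis using hyp that A unfolding w_def
      by (smt (verit, best) atLeastAtMost_iff mult_pos_pos)
  qed
  have sign: "(\<forall>s\<in>{a..b}. w s \<ge> 0) \<or> (\<forall>s\<in>{a..b}. w s \<le> 0)"
  proof (rule ccontr)
    assume "\<not> ?thesis"
    then obtain x y where xy: "x \<in> {a..b}" "y \<in> {a..b}" "w x < 0" "w y > 0" by force
    show False
    proof (cases "x < y")
      case True
      have "continuous_on {x..y} w" by (rule continuous_on_subset[OF cw]) (use xy in auto)
      then obtain z where "x \<le> z" "z \<le> y" "w z = 0" using IVT'[of w x 0 y] xy True by auto
      moreover then have "z \<noteq> x" "z \<noteq> y" using xy by auto
      ultimately show False using nz[of z] xy by auto
    next
      case False
      then have "y < x" using xy by (cases "x = y") auto
      have "continuous_on {y..x} w" by (rule continuous_on_subset[OF cw]) (use xy in auto)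
      then obtain z where "y \<le> z" "z \<le> x" "w z = 0" using IVT2'[of w x 0 y] xy \<open>y < x\<close> by auto
      moreover then have "z \<noteq> x" "z \<noteq> y" using xy by auto
      ultimately show False using nz[of z] xy by auto
    qed
  qed
  obtain \<sigma> :: real where sg: "\<sigma> = 1 \<or> \<sigma> = -1" and sw: "\<forall>s\<in>{a..b}. \<sigma> * w s = \<bar>w s\<bar>"
    using sign by (metis abs_of_nonneg abs_of_nonpos mult_1 mult_minus1)
  have Kc: "\<sigma> * (g v - g u) \<ge> 2 * A / (\<alpha> + 1) * (v - u) powr (\<alpha> + 1)"
    if uv: "a \<le> u" "u \<le> v" "v \<le> b" for u v
  proof -
    have der': "\<forall>s\<in>{u<..<v}. (g has_real_derivative 2 * w s) (at s)" using dg uv by auto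
    have cg': "continuous_on {u..v} g" using cg by (rule continuous_on_subset) (use uv ab in auto)
    from hyp show ?thesis
    proof
      assume h: "\<forall>s\<in>{a..b}. \<bar>f' s * f'' s\<bar> \<ge> A * (s - \<theta>1) powr \<alpha>"
      show ?thesis
        by (rule key1[OF uv(2) der' cg' sg _ _ A al, of \<theta>1]) (use h sw uv ab in \<open>auto simp: w_def\<close>)
    next
      assume h: "\<forall>s\<in>{a..b}. \<bar>f' s * f'' s\<bar> \<ge> A * (\<theta>2 - s) powr \<alpha>"
      show ?thesis
        by (rule key2[OF uv(2) der' cg' sg _ _ A al, of \<theta>2]) (use h sw uv ab in \<open>auto simp: w_def\<close>)
    qed
  qed
  have cpos: "2 * A / (\<alpha> + 1) * (v - u) powr (\<alpha> + 1) \<ge> 0" for u v using A al by auto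
  show "\<forall>u v. a \<le> u \<longrightarrow> u \<le> v \<longrightarrow> v \<le> b \<longrightarrow> \<bar>f' v * f' v - f' u * f' u\<bar> \<ge> 2 * A / (\<alpha> + 1) * (v - u) powr (\<alpha> + 1)"
  proof (intro allI impI)
    fix u v assume "a \<le> u" "u \<le> v" "v \<le> b"
    then show "\<bar>f' v * f' v - f' u * f' u\<bar> \<ge> 2 * A / (\<alpha> + 1) * (v - u) powr (\<alpha> + 1)"
      using Kc[of u v] sg unfolding g_def by (auto simp: abs_if)
  qed
  show "\<forall>x z y. a \<le> x \<longrightarrow> x \<le> z \<longrightarrow> z \<le> y \<longrightarrow> y \<le> b \<longrightarrow> f' z * f' z \<ge> min (f' x * f' x) (f' y * f' y)"
  proof (intro allI impI)
    fix x z y assume "a \<le> x" "x \<le> z" "z \<le> y" "y \<le> b"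
    then have "\<sigma> * (g z - g x) \<ge> 0" "\<sigma> * (g y - g z) \<ge> 0"
      using Kc[of x z] Kc[of z y] cpos[of z x] cpos[of y z] by auto
    then show "f' z * f' z \<ge> min (f' x * f' x) (f' y * f' y)"
      using sg unfolding g_def by auto
  qed
qed

lemma pointwise:
  fixes x g :: real
  assumes x: "0 < x" "x < 1" and g: "g > 0"
  shows "\<exists>k::nat. x \<le> 2 powr (- real k) \<and> x powr (-1/g) \<le> 2 powr ((real k + 1)/g)"
proof -
  define y where "y = 1/x"
  have y: "y > 1" using x unfolding y_def by simp
  define k where "k = nat \<lfloor>log 2 y\<rfloor>"
  have lp: "log 2 y > 0" using y by simp
  have k1: "real k \<le> log 2 y" unfolding k_def using lp by linarith
  have k2: "log 2 y < real k + 1" unfolding k_def using lp by linarith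
  have "2 powr real k \<le> y" using k1 le_log_iff[of 2 y "real k"] y by simp
  then have "x \<le> 2 powr (- real k)" using x unfolding y_def by (simp add: powr_minus_divide field_simps)
  moreover have "y < 2 powr (real k + 1)" using k2 le_log_iff[of 2 y "real k + 1"] y by simp
  then have "y powr (1/g) \<le> (2 powr (real k + 1)) powr (1/g)" using y g by (intro powr_mono2) auto
  then have "x powr (-1/g) \<le> 2 powr ((real k + 1)/g)"
    using x unfolding y_def by (simp add: powr_powr powr_minus_divide powr_divide)
  ultimately show ?thesis by blast
qed

theorem lemma3p5:
  fixes \<theta>1 \<theta>2 \<gamma> A \<alpha> :: real
  assumes "\<theta>1 < \<theta>2" and "\<gamma> > 1" and "A > 0" and "\<alpha> > 0" and "\<alpha> < 2 * \<gamma> - 3"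
  shows "\<exists>C>0. \<forall>(f::real \<Rightarrow> real) f' f'' a b.
     (\<forall>s\<in>{\<theta>1..\<theta>2}. (f has_real_derivative f' s) (at s within {\<theta>1..\<theta>2})
                    \<and> (f' has_real_derivative f'' s) (at s within {\<theta>1..\<theta>2}))
     \<and> continuous_on {\<theta>1..\<theta>2} f''
     \<and> \<theta>1 \<le> a \<and> a \<le> b \<and> b \<le> \<theta>2
     \<and> ((\<forall>s\<in>{a..b}. \<bar>f' s * f'' s\<bar> \<ge> A * (s - \<theta>1) powr \<alpha>)
        \<or> (\<forall>s\<in>{a..b}. \<bar>f' s * f'' s\<bar> \<ge> A * (\<theta>2 - s) powr \<alpha>))
     \<longrightarrow> (\<integral>\<^sup>+ s. ennreal (\<bar>f s\<bar> powr (-1 / \<gamma>)) * indicator {a..b} s \<partial>lborel) \<le> ennreal C"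
proof -
  define c where "c = 2 * A / (\<alpha> + 1)"
  define K0 where "K0 = 2 * c powr (-1/(\<alpha>+1)) + 4"
  define \<beta> where "\<beta> = 2 / (\<alpha> + 3)"
  define r where "r = 2 powr (1/\<gamma> - \<beta>)"
  define M where "M = K0 * 2 powr (1/\<gamma>)"
  define C where "C = (\<theta>2 - \<theta>1) + M / (1 - r)"
  have c: "c > 0" unfolding c_def using assms by auto
  have K0: "K0 > 0" unfolding K0_def by (smt (verit) powr_ge_zero)
  have M: "M > 0" unfolding M_def using K0 by simp
  have g0: "\<gamma> > 0" using assms by auto
  have "1/\<gamma> < \<beta>" unfolding \<beta>_def using assms by (simp add: field_simps)
  then have "2 powr (1/\<gamma> - \<beta>) < 2 powr 0" by (intro powr_less_mono) auto
  then have r1: "r < 1" "r > 0" unfolding r_def by auto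
  have Mr: "M / (1 - r) > 0" using M r1 by simp
  have Cpos: "C > 0" unfolding C_def using assms Mr by simp
  have geo: "(\<Sum>k. ennreal (M * r ^ k)) = ennreal (M / (1 - r))"
  proof -
    have "summable (\<lambda>k. M * r ^ k)" using r1 by (intro summable_mult summable_geometric) auto
    moreover have "(\<Sum>k. M * r ^ k) = M / (1 - r)" using r1 by (simp add: suminf_mult suminf_geometric)
    ultimately show ?thesis using M r1 by (subst suminf_ennreal2) auto
  qed
  have termeq: "2 powr ((real k + 1)/\<gamma>) * (K0 * (2 powr (- real k)) powr \<beta>) = M * r ^ k" for k :: nat
  proof -
    have "r ^ k = 2 powr (real k * (1/\<gamma> - \<beta>))" unfolding r_def
      by (simp add: powr_realpow[symmetric] powr_powr mult.commute)
    moreover have "(2 powr (- real k)) powr \<beta> = 2 powr (- real k * \<beta>)" by (simp add: powr_powr)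
    ultimately show ?thesis unfolding M_def
      by (simp add: powr_add[symmetric] algebra_simps add_divide_distrib)
  qed
  show ?thesis
  proof (intro exI[of _ C] conjI Cpos allI impI)
    fix f f' f'' :: "real \<Rightarrow> real" and a b :: real
    assume H: "(\<forall>s\<in>{\<theta>1..\<theta>2}. (f has_real_derivative f' s) (at s within {\<theta>1..\<theta>2})
                    \<and> (f' has_real_derivative f'' s) (at s within {\<theta>1..\<theta>2}))
     \<and> continuous_on {\<theta>1..\<theta>2} f''
     \<and> \<theta>1 \<le> a \<and> a \<le> b \<and> b \<le> \<theta>2
     \<and> ((\<forall>s\<in>{a..b}. \<bar>f' s * f'' s\<bar> \<ge> A * (s - \<theta>1) powr \<alpha>)
        \<or> (\<forall>s\<in>{a..b}. \<bar>f' s * f'' s\<bar> \<ge> A * (\<theta>2 - s) powr \<alpha>))"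
    then have der: "\<forall>s\<in>{\<theta>1..\<theta>2}. (f has_real_derivative f' s) (at s within {\<theta>1..\<theta>2})
                    \<and> (f' has_real_derivative f'' s) (at s within {\<theta>1..\<theta>2})"
      and cont: "continuous_on {\<theta>1..\<theta>2} f''" and ab: "\<theta>1 \<le> a" "a \<le> b" "b \<le> \<theta>2"
      and hyp: "(\<forall>s\<in>{a..b}. \<bar>f' s * f'' s\<bar> \<ge> A * (s - \<theta>1) powr \<alpha>)
        \<or> (\<forall>s\<in>{a..b}. \<bar>f' s * f'' s\<bar> \<ge> A * (\<theta>2 - s) powr \<alpha>)" by auto
    note QK = qcK[OF der cont ab assms(3,4) hyp]
    have derab: "\<forall>s\<in>{a..b}. (f has_real_derivative f' s) (at s within {a..b})"
    proof
      fix s assume "s \<in> {a..b}"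
      then have "(f has_real_derivative f' s) (at s within {\<theta>1..\<theta>2})" using der ab by auto
      then show "(f has_real_derivative f' s) (at s within {a..b})"
        by (rule DERIV_subset) (use ab in auto)
    qed
    have "\<forall>k::nat. \<exists>T. T \<in> sets lborel \<and> {s\<in>{a..b}. \<bar>f s\<bar> \<le> 2 powr (- real k)} \<subseteq> T \<and>
           emeasure lborel T \<le> ennreal (K0 * (2 powr (- real k)) powr \<beta>)"
    proof
      fix k :: nat
      show "\<exists>T. T \<in> sets lborel \<and> {s\<in>{a..b}. \<bar>f s\<bar> \<le> 2 powr (- real k)} \<subseteq> T \<and>
           emeasure lborel T \<le> ennreal (K0 * (2 powr (- real k)) powr \<beta>)"
        using sublevel[OF ab(2) derab QK(1) QK(2)[folded c_def] c assms(4), of "2 powr (- real k)"]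
        unfolding K0_def \<beta>_def by auto
    qed
    then obtain T where T: "\<And>k. T k \<in> sets lborel" "\<And>k. {s\<in>{a..b}. \<bar>f s\<bar> \<le> 2 powr (- real k)} \<subseteq> T k"
      "\<And>k. emeasure lborel (T k) \<le> ennreal (K0 * (2 powr (- real k)) powr \<beta>)"
      by metis
    have pw: "ennreal (\<bar>f s\<bar> powr (-1 / \<gamma>)) * indicator {a..b} s \<le>
        indicator {a..b} s + (\<Sum>k. ennreal (2 powr ((real k + 1)/\<gamma>)) * indicator (T k) s)" for s
    proof (cases "s \<in> {a..b}")
      case False then show ?thesis by simp
    next
      case sin: True
      show ?thesis
      proof (cases "f s = 0")
        case True then show ?thesis by simp
      next
        case fn0: False
        show ?thesis
        proof (cases "\<bar>f s\<bar> \<ge> 1")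
          case True
          have "-1 / \<gamma> \<le> 0" using g0 by simp
          from powr_mono2'[OF this _ True] have "\<bar>f s\<bar> powr (-1 / \<gamma>) \<le> 1" by simp
          then have "ennreal (\<bar>f s\<bar> powr (-1 / \<gamma>)) * indicator {a..b} s \<le> indicator {a..b} s"
            using sin by (simp add: ennreal_le_1)
          then show ?thesis by (simp add: add_increasing2)
        next
          case False
          then obtain k :: nat where k: "\<bar>f s\<bar> \<le> 2 powr (- real k)" "\<bar>f s\<bar> powr (-1/\<gamma>) \<le> 2 powr ((real k + 1)/\<gamma>)"
            using pointwise[of "\<bar>f s\<bar>" \<gamma>] fn0 g0 by auto
          have "s \<in> T k" using T(2)[of k] k sin by auto
          then have "ennreal (\<bar>f s\<bar> powr (-1 / \<gamma>)) * indicator {a..b} s \<le> ennreal (2 powr ((real k + 1)/\<gamma>)) * indicator (T k) s"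
            using sin k by (simp add: ennreal_leI)
          also have "\<dots> \<le> (\<Sum>k. ennreal (2 powr ((real k + 1)/\<gamma>)) * indicator (T k) s)"
          proof -
            define F where "F = (\<lambda>k. ennreal (2 powr ((real k + 1)/\<gamma>)) * indicator (T k) s :: ennreal)"
            have "sum F {k} \<le> suminf F" by (rule sum_le_suminf) auto
            then show ?thesis unfolding F_def by (simp only: sum.insert_if finite.emptyI empty_iff if_False sum.empty add_0_right)
          qed
          finally show ?thesis by (simp add: add_increasing)
        qed
      qed
    qed
    have "(\<integral>\<^sup>+ s. ennreal (\<bar>f s\<bar> powr (-1 / \<gamma>)) * indicator {a..b} s \<partial>lborel)
       \<le> (\<integral>\<^sup>+ s. indicator {a..b} s + (\<Sum>k. ennreal (2 powr ((real k + 1)/\<gamma>)) * indicator (T k) s) \<partial>lborel)"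
      by (intro nn_integral_mono pw)
    also have "\<dots> = emeasure lborel {a..b} + (\<Sum>k. ennreal (2 powr ((real k + 1)/\<gamma>)) * emeasure lborel (T k))"
      using T(1) by (simp add: nn_integral_add nn_integral_suminf nn_integral_cmult_indicator)
    also have "\<dots> \<le> ennreal (\<theta>2 - \<theta>1) + (\<Sum>k. ennreal (M * r ^ k))"
    proof (intro add_mono suminf_le summableI)
      show "emeasure lborel {a..b} \<le> ennreal (\<theta>2 - \<theta>1)" using ab by (simp add: ennreal_leI)
    next
      fix k :: nat
      have "ennreal (2 powr ((real k + 1)/\<gamma>)) * emeasure lborel (T k)
            \<le> ennreal (2 powr ((real k + 1)/\<gamma>)) * ennreal (K0 * (2 powr (- real k)) powr \<beta>)"
        by (intro mult_left_mono T(3)) auto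
      also have "\<dots> = ennreal (M * r ^ k)" using K0 by (simp add: ennreal_mult[symmetric] termeq)
      finally show "ennreal (2 powr ((real k + 1)/\<gamma>)) * emeasure lborel (T k) \<le> ennreal (M * r ^ k)" .
    qed
    also have "\<dots> = ennreal C" unfolding geo C_def using assms Mr
      by (subst ennreal_plus[symmetric]) auto
    finally show "(\<integral>\<^sup>+ s. ennreal (\<bar>f s\<bar> powr (-1 / \<gamma>)) * indicator {a..b} s \<partial>lborel) \<le> ennreal C" .
  qed
qed

end
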